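(* Let $A \in \mathbb{C}^{n \times n}$, and fix $A^-\in A\{1\}$ and $A^{GD}\in A\{GD\}$. Then $A^{GD1}=A^{GD}AA^{-}$ is the unique matrix $X \in \mathbb{C}^{n \times n}$ satisfying $$AX = P_{R(A),N(AA^{-})} \quad\text{and}\quad R(X)\subseteq R(A^{GD}A).$$
   Context: For $A\in\mathbb{C}^{n\times n}$, $ind(A)$ is the smallest nonnegative integer $k$ with $\mathrm{rank}(A^k)=\mathrm{rank}(A^{k+1})$. $A\{1\}$ is the set of matrices $X$ with $AXA=A$. With $k=ind(A)$, $A\{GD\}$ is the set of G-Drazin inverses of $A$: matrices $X$ with $AXA=A$, $XA^{k+1}=A^k$, $A^{k+1}X=A^k$. $R(\cdot)$, $N(\cdot)$ denote range and null space; $P_{S,T}$ is the projector onto $S$ along $T$. *)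

theory Defs
  imports "HOL-Analysis.Analysis"
begin

type_synonym 'n cmat = "complex ^'n ^'n"

definition mrange :: "complex ^'n ^'m \<Rightarrow> (complex ^'m) set" where
  "mrange A = range (\<lambda>x. A *v x)"

definition mnull :: "complex ^'n ^'m \<Rightarrow> (complex ^'n) set" where
  "mnull A = {x. A *v x = 0}"

definition mrank :: "complex ^'n ^'m \<Rightarrow> nat" where
  "mrank A = dim (mrange A)"

primrec mpow :: "complex ^'n ^'n \<Rightarrow> nat \<Rightarrow> complex ^'n ^'n" where
  "mpow A 0 = mat 1"
| "mpow A (Suc k) = A ** mpow A k"

definition mindex :: "complex ^'n ^'n \<Rightarrow> nat" where
  "mindex A = (LEAST k. mrank (mpow A k) = mrank (mpow A (Suc k)))"

definition inner_inv :: "complex ^'n ^'n \<Rightarrow> (complex ^'n ^'n) set" where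
  "inner_inv A = {X. A ** X ** A = A}"

definition gdrazin :: "complex ^'n ^'n \<Rightarrow> (complex ^'n ^'n) set" where
  "gdrazin A = {X. A ** X ** A = A
     \<and> X ** mpow A (Suc (mindex A)) = mpow A (mindex A)
     \<and> mpow A (Suc (mindex A)) ** X = mpow A (mindex A)}"

text \<open>The projector P_{S,T} onto S along T (meaningful when S and T are
  complementary subspaces): the unique matrix P with Px \<in> S and x - Px \<in> T.\<close>
definition proj_along :: "(complex ^'n) set \<Rightarrow> (complex ^'n) set \<Rightarrow> complex ^'n ^'n" where
  "proj_along S T = (THE P. \<forall>x. P *v x \<in> S \<and> x - P *v x \<in> T)"

end

theory Submission
  imports Defs
begin

lemma idem_AAm:
  fixes A Am :: "complex ^'n ^'n"
  assumes "A ** Am ** A = A"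
  shows "(A ** Am) ** (A ** Am) = A ** Am"
  by (metis assms matrix_mul_assoc)

lemma proj_eq:
  fixes A Am :: "complex ^'n ^'n"
  assumes h: "A ** Am ** A = A"
  shows "proj_along (mrange A) (mnull (A ** Am)) = A ** Am"
  unfolding proj_along_def
proof (rule the_equality)
  show "\<forall>x. (A ** Am) *v x \<in> mrange A \<and> x - (A ** Am) *v x \<in> mnull (A ** Am)"
  proof
    fix x :: "complex ^'n"
    have "(A ** Am) *v x = A *v (Am *v x)" by (simp add: matrix_vector_mul_assoc)
    hence 1: "(A ** Am) *v x \<in> mrange A" unfolding mrange_def by auto
    have "(A ** Am) *v (x - (A ** Am) *v x) = (A ** Am) *v x - ((A ** Am) ** (A ** Am)) *v x"
      by (simp add: matrix_vector_mult_diff_distrib matrix_vector_mul_assoc)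
    also have "\<dots> = 0" using idem_AAm[OF h] by simp
    finally show "(A ** Am) *v x \<in> mrange A \<and> x - (A ** Am) *v x \<in> mnull (A ** Am)"
      using 1 unfolding mnull_def by simp
  qed
next
  fix P :: "complex ^'n ^'n"
  assume P: "\<forall>x. P *v x \<in> mrange A \<and> x - P *v x \<in> mnull (A ** Am)"
  show "P = A ** Am"
  proof (rule iffD2[OF matrix_eq], rule allI)
    fix x :: "complex ^'n"
    obtain y where y: "P *v x = A *v y" using P unfolding mrange_def by blast
    have "(A ** Am) *v (x - P *v x) = 0" using P unfolding mnull_def by blast
    hence "(A ** Am) *v x = (A ** Am) *v (P *v x)"
      by (simp add: matrix_vector_mult_diff_distrib)
    also have "\<dots> = (A ** Am ** A) *v y" using y by (simp add: matrix_vector_mul_assoc)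
    also have "\<dots> = P *v x" using h y by simp
    finally show "P *v x = (A ** Am) *v x" by simp
  qed
qed

theorem theorem2p4:
  fixes A Am Agd :: "complex ^'n ^'n"
  assumes "Am \<in> inner_inv A" and "Agd \<in> gdrazin A"
  shows "\<forall>X :: complex ^'n ^'n.
           (A ** X = proj_along (mrange A) (mnull (A ** Am))
            \<and> mrange X \<subseteq> mrange (Agd ** A))
           \<longleftrightarrow> X = Agd ** A ** Am"
proof
  fix X :: "complex ^'n ^'n"
  have h: "A ** Am ** A = A" using assms(1) unfolding inner_inv_def by simp
  have g: "A ** Agd ** A = A" using assms(2) unfolding gdrazin_def by simp
  note pe = proj_eq[OF h]
  show "(A ** X = proj_along (mrange A) (mnull (A ** Am))
            \<and> mrange X \<subseteq> mrange (Agd ** A)) \<longleftrightarrow> X = Agd ** A ** Am"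
  proof
    assume a: "A ** X = proj_along (mrange A) (mnull (A ** Am)) \<and> mrange X \<subseteq> mrange (Agd ** A)"
    hence AX: "A ** X = A ** Am" using pe by simp
    show "X = Agd ** A ** Am"
    proof (rule iffD2[OF matrix_eq], rule allI)
      fix v :: "complex ^'n"
      have "X *v v \<in> mrange (Agd ** A)" using a unfolding mrange_def by blast
      then obtain w where w: "X *v v = (Agd ** A) *v w" unfolding mrange_def by blast
      have "A *v (X *v v) = (A ** Am) *v v" using AX by (simp add: matrix_vector_mul_assoc)
      moreover have "A *v (X *v v) = A *v w" using w g
        by (simp add: matrix_vector_mul_assoc matrix_mul_assoc)
      ultimately have Aw: "A *v w = (A ** Am) *v v" by simp
      have "X *v v = Agd *v (A *v w)" using w by (simp add: matrix_vector_mul_assoc)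
      also have "\<dots> = (Agd ** A ** Am) *v v" using Aw by (simp add: matrix_vector_mul_assoc matrix_mul_assoc)
      finally show "X *v v = (Agd ** A ** Am) *v v" .
    qed
  next
    assume x: "X = Agd ** A ** Am"
    have "A ** X = A ** Am" using x g by (metis matrix_mul_assoc)
    moreover have "mrange X \<subseteq> mrange (Agd ** A)"
    proof
      fix z assume "z \<in> mrange X"
      then obtain v where "z = X *v v" unfolding mrange_def by blast
      hence "z = (Agd ** A) *v (Am *v v)" using x by (simp add: matrix_vector_mul_assoc)
      thus "z \<in> mrange (Agd ** A)" unfolding mrange_def by blast
    qed
    ultimately show "A ** X = proj_along (mrange A) (mnull (A ** Am)) \<and> mrange X \<subseteq> mrange (Agd ** A)"
      using pe by simp
  qed
qed

end
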